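(* For every integer $n\ge 1$ and every integer $k$ with $0\le k\le 2^{n}-2$, $$B_{k+1}(t)B_{2^{n}-k}(t)-B_{k}(t)B_{2^{n}-k-1}(t)=t^{n}.$$
   Context: The Stern polynomials $B_n(t)\in\mathbb{Z}[t]$, $n\ge 0$, are defined by $B_0(t)=0$, $B_1(t)=1$, $B_{2n}(t)=tB_n(t)$ and $B_{2n+1}(t)=B_n(t)+B_{n+1}(t)$ for $n\ge 1$. *)

theory Defs
  imports "HOL-Computational_Algebra.Polynomial"
begin

function stern :: "nat \<Rightarrow> int poly" where
  "stern n = (if n = 0 then 0 else if n = 1 then 1
     else if even n then [:0, 1:] * stern (n div 2)
     else stern (n div 2) + stern (n div 2 + 1))"
  by auto
termination
  by (relation "measure id") (auto elim: oddE)

declare stern.simps [simp del]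

lemma stern_0: "stern 0 = 0" by (simp add: stern.simps)
lemma stern_1: "stern 1 = 1" by (simp add: stern.simps)
lemma stern_even: "n \<ge> 1 \<Longrightarrow> stern (2 * n) = [:0, 1:] * stern n"
  by (subst stern.simps) auto
lemma stern_odd: "n \<ge> 1 \<Longrightarrow> stern (2 * n + 1) = stern n + stern (n + 1)"
  by (subst stern.simps) auto

end

theory Submission
  imports Defs
begin

lemma se: "stern (2 * j) = [:0, 1:] * stern j"
  by (cases "j = 0") (auto simp: stern_0 stern_even)

lemma so: "stern (2 * j + 1) = stern j + stern (j + 1)"
  using stern_odd[of j] by (cases "j = 0") (auto simp: stern_0 stern_1)

lemma gen: "k + m = 2 ^ n - 1 \<Longrightarrow>
  stern (k + 1) * stern (m + 1) - stern k * stern m = [:0, 1:] ^ n"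
proof (induction n arbitrary: k m)
  case 0
  then show ?case using stern_1 by (simp add: stern_0)
next
  case (Suc n)
  have p: "(2::nat) ^ n \<ge> 1" by simp
  show ?case
  proof (cases "even k")
    case True
    then obtain j where k: "k = 2 * j" by blast
    obtain i where m: "m = 2 * i + 1" and ji: "j + i = 2 ^ n - 1"
      proof -
      obtain N where N: "N = (2::nat) ^ n" by blast
      have "k + m = 2 * N - 1" "N \<ge> 1" using Suc.prems p N by auto
      moreover have N': "(2::nat) ^ n = N" using N by simp
      ultimately show ?thesis using k by (intro that[of "N - 1 - j"]) ((unfold N')?, arith)+
    qed
    have IH: "stern (j + 1) * stern (i + 1) - stern j * stern i = [:0, 1:] ^ n"
      using Suc.IH ji by blast
    have "stern (k + 1) * stern (m + 1) - stern k * stern m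
       = [:0,1:] * (stern (j + 1) * stern (i + 1) - stern j * stern i)"
      using se[of "i+1"] so[of j] so[of i] se[of j] k m
      by (simp add: algebra_simps)
    then show ?thesis using IH by simp
  next
    case False
    then obtain j where k: "k = 2 * j + 1" using oddE by blast
    obtain i where m: "m = 2 * i" and ji: "j + i = 2 ^ n - 1"
      proof -
      obtain N where N: "N = (2::nat) ^ n" by blast
      have "k + m = 2 * N - 1" "N \<ge> 1" using Suc.prems p N by auto
      moreover have N': "(2::nat) ^ n = N" using N by simp
      ultimately show ?thesis using k by (intro that[of "N - 1 - j"]) ((unfold N')?, arith)+
    qed
    have IH: "stern (j + 1) * stern (i + 1) - stern j * stern i = [:0, 1:] ^ n"
      using Suc.IH ji by blast
    have "stern (k + 1) * stern (m + 1) - stern k * stern m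
       = [:0,1:] * (stern (j + 1) * stern (i + 1) - stern j * stern i)"
      using se[of "j+1"] so[of j] so[of i] se[of i] k m
      by (simp add: algebra_simps)
    then show ?thesis using IH by simp
  qed
qed

theorem theorem2p5:
  fixes n k :: nat
  assumes "n \<ge> 1" and "k \<le> 2 ^ n - 2"
  shows "stern (k + 1) * stern (2 ^ n - k) - stern k * stern (2 ^ n - k - 1) = [:0, 1:] ^ n"
proof -
  have p: "(2::nat) ^ n \<ge> 2" using assms(1)
    by (metis one_le_numeral power_increasing power_one_right)
  have "k + (2 ^ n - k - 1) = 2 ^ n - 1" using assms p by simp
  from gen[OF this] have "stern (k + 1) * stern (2 ^ n - k - 1 + 1) - stern k * stern (2 ^ n - k - 1) = [:0, 1:] ^ n" .
  moreover have "2 ^ n - k - 1 + 1 = 2 ^ n - k" using assms p by simp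
  ultimately show ?thesis by simp
qed

end
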